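(* Let $f:\mathbb{R}^n\times\mathbb{R}^m\to\mathbb{R}^n$ be a polynomial map and let $\boldsymbol\psi:\mathbb{R}^n\to\mathbb{R}^m$ be a ReLU neural network $\boldsymbol\psi(x) = W_N\rho(W_{N-1}\cdots\rho(W_2\rho(W_1x+b_1)+b_2)\cdots+b_{N-1})+b_N$, where $\rho(z)=\max(z,0)$ is applied componentwise, modeled semialgebraically as follows: the lifting variable is $\lambda=(\lambda_1,\dots,\lambda_{N-1})$ (the outputs of the hidden layers), and the constraints $g(x,u,\lambda)\ge0$, $h(x,u,\lambda)=0$ consist of, with $z_1 = W_1x+b_1$ and $z_i = W_i\lambda_{i-1}+b_i$ for $2\le i\le N-1$: $\lambda_i\ge z_i$, $\lambda_i\ge 0$, $\lambda_i\odot(\lambda_i - z_i)=0$ for $i=1,\dots,N-1$ (componentwise, $\odot$ the componentwise product), and $u = W_N\lambda_{N-1}+b_N$. Then the function $x\mapsto \inf\{\|u\|_2+\|\lambda\|_2 \mid g(x,u,\lambda)\ge0,\ h(x,u,\lambda)=0\}$ is bounded on some neighborhood of the origin. Moreover, with \[ \mathbf{K} = \{(x,u,\lambda,x^+,u^+,\lambda^+) \mid x^+ = f(x,u),\ g(x,u,\lambda)\ge 0,\ h(x,u,\lambda)=0,\ g(x^+,u^+,\lambda^+)\ge 0,\ h(x^+,u^+,\lambda^+)=0\}, \] if a continuous function $V$ of $(x,u,\lambda)$ satisfies $V(x^+,u^+,\lambda^+) - V(x,u,\lambda)\le -\|x\|_2^2$ and $V(x,u,\lambda)\ge 0$ for all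 $(x,u,\lambda,x^+,u^+,\lambda^+)\in\mathbf{K}$, then the closed-loop system $x_{k+1}=f(x_k,\boldsymbol\psi(x_k))$ is globally asymptotically stable.
   Context: The closed-loop system is globally asymptotically stable if (i) for all initial conditions $x_0$, $\lim_{k\to\infty}x_k=0$, and (ii) for every $\epsilon>0$ there exists $\delta>0$ such that $\|x_0\|_2\le\delta$ implies $\|x_k\|_2\le\epsilon$ for all $k$. *)

theory Defs
  imports "HOL-Analysis.Analysis"
begin

inductive poly_xu :: "(real^'n \<Rightarrow> real^'m \<Rightarrow> real) \<Rightarrow> bool" where
  const: "poly_xu (\<lambda>x u. c)"
| var_x: "poly_xu (\<lambda>x u. x $ j)"
| var_u: "poly_xu (\<lambda>x u. u $ k)"
| add: "poly_xu p \<Longrightarrow> poly_xu q \<Longrightarrow> poly_xu (\<lambda>x u. p x u + q x u)"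
| mult: "poly_xu p \<Longrightarrow> poly_xu q \<Longrightarrow> poly_xu (\<lambda>x u. p x u * q x u)"

definition polynomial_map :: "(real^'n \<Rightarrow> real^'m \<Rightarrow> real^'n) \<Rightarrow> bool" where
  "polynomial_map f \<longleftrightarrow> (\<forall>i. poly_xu (\<lambda>x u. f x u $ i))"

text \<open>A ReLU network R^n -> R^m with N = depth layers (N-1 hidden layers).
  Hidden layer i (1 <= i <= N-1) has width (width i); its components are indexed by j < width i.
  W_in j k : entry (j,k) of W_1;  W_hid i j k : entry (j,k) of W_i for 2 <= i <= N-1;
  W_out r k : entry (r,k) of W_N;  bias i j : component j of b_i (1 <= i <= N-1);
  b_out r : component r of b_N.\<close>
record ('n, 'm) relu_net =
  depth :: nat
  width :: "nat \<Rightarrow> nat"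
  W_in :: "nat \<Rightarrow> 'n \<Rightarrow> real"
  W_hid :: "nat \<Rightarrow> nat \<Rightarrow> nat \<Rightarrow> real"
  W_out :: "'m \<Rightarrow> nat \<Rightarrow> real"
  bias :: "nat \<Rightarrow> nat \<Rightarrow> real"
  b_out :: "'m \<Rightarrow> real"

definition pre_act :: "('n::finite, 'm) relu_net \<Rightarrow> real^'n \<Rightarrow> nat \<Rightarrow> (nat \<Rightarrow> real) \<Rightarrow> nat \<Rightarrow> real" where
  "pre_act P x i prev j =
     (if i = 1 then (\<Sum>k\<in>UNIV. W_in P j k * x $ k) + bias P 1 j
      else (\<Sum>k<width P (i - 1). W_hid P i j k * prev k) + bias P i j)"

definition relu :: "real \<Rightarrow> real" where
  "relu z = max z 0"

fun hidden :: "('n::finite, 'm) relu_net \<Rightarrow> real^'n \<Rightarrow> nat \<Rightarrow> nat \<Rightarrow> real" where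
  "hidden P x 0 = (\<lambda>j. 0)"
| "hidden P x (Suc i) =
     (\<lambda>j. if j < width P (Suc i) then relu (pre_act P x (Suc i) (hidden P x i) j) else 0)"

definition out_layer :: "('n, 'm::finite) relu_net \<Rightarrow> (nat \<Rightarrow> real) \<Rightarrow> real^'m" where
  "out_layer P l = (\<chi> r. (\<Sum>k<width P (depth P - 1). W_out P r k * l k) + b_out P r)"

definition psi :: "('n::finite, 'm::finite) relu_net \<Rightarrow> real^'n \<Rightarrow> real^'m" where
  "psi P x = out_layer P (hidden P x (depth P - 1))"

text \<open>The lifting variable lambda = (lambda_1,...,lambda_{N-1}) is represented as
  l :: nat => nat => real, l i j = component j of lambda_i; it lives in the finite-dimensional
  space of such l vanishing outside 1 <= i <= N-1, j < width i.\<close>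
definition lam_space :: "('n, 'm) relu_net \<Rightarrow> (nat \<Rightarrow> nat \<Rightarrow> real) set" where
  "lam_space P = {l. \<forall>i j. (i < 1 \<or> i > depth P - 1 \<or> j \<ge> width P i) \<longrightarrow> l i j = 0}"

definition lam_norm :: "('n, 'm) relu_net \<Rightarrow> (nat \<Rightarrow> nat \<Rightarrow> real) \<Rightarrow> real" where
  "lam_norm P l = sqrt (\<Sum>i\<in>{1..depth P - 1}. \<Sum>j<width P i. (l i j)\<^sup>2)"

definition feasible :: "('n::finite, 'm::finite) relu_net \<Rightarrow> real^'n \<Rightarrow> real^'m \<Rightarrow> (nat \<Rightarrow> nat \<Rightarrow> real) \<Rightarrow> bool" where
  "feasible P x u l \<longleftrightarrow>
     l \<in> lam_space P \<and>
     (\<forall>i\<in>{1..depth P - 1}. \<forall>j < width P i.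
        l i j \<ge> pre_act P x i (l (i - 1)) j \<and>
        l i j \<ge> 0 \<and>
        l i j * (l i j - pre_act P x i (l (i - 1)) j) = 0) \<and>
     u = out_layer P (l (depth P - 1))"

definition glob_asymp_stable :: "(real^'n \<Rightarrow> real^'n) \<Rightarrow> bool" where
  "glob_asymp_stable F \<longleftrightarrow>
     (\<forall>x0. (\<lambda>k. (F ^^ k) x0) \<longlonglongrightarrow> 0) \<and>
     (\<forall>\<epsilon>>0. \<exists>\<delta>>0. \<forall>x0. norm x0 \<le> \<delta> \<longrightarrow> (\<forall>k. norm ((F ^^ k) x0) \<le> \<epsilon>))"

end

theory Submission
  imports Defs
begin

definition lhat :: "('n::finite, 'm::finite) relu_net \<Rightarrow> real^'n \<Rightarrow> nat \<Rightarrow> nat \<Rightarrow> real" where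
  "lhat P x = (\<lambda>i j. if 1 \<le> i \<and> i \<le> depth P - 1 then hidden P x i j else 0)"

lemma hidden_cont: "continuous_on UNIV (\<lambda>x. hidden P x i j)"
proof (induction i arbitrary: j)
  case 0
  then show ?case by simp
next
  case (Suc i)
  have "continuous_on UNIV (\<lambda>x. pre_act P x (Suc i) (hidden P x i) j)"
  proof (cases "Suc i = 1")
    case True
    then show ?thesis unfolding pre_act_def by (simp add: continuous_intros)
  next
    case False
    then show ?thesis unfolding pre_act_def
      by (simp del: hidden.simps, intro continuous_intros Suc.IH)
  qed
  then show ?case unfolding relu_def hidden.simps(2)
    by (cases "j < width P (Suc i)") (simp_all add: continuous_intros del: hidden.simps)
qed

lemma lhat_cont [continuous_intros]: "continuous_on UNIV (\<lambda>x. lhat P x i j)"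
proof (cases "1 \<le> i \<and> i \<le> depth P - 1")
  case True
  then have "(\<lambda>x. lhat P x i j) = (\<lambda>x. hidden P x i j)" unfolding lhat_def by auto
  then show ?thesis by (simp only:) (rule hidden_cont)
next
  case False
  then have "(\<lambda>x. lhat P x i j) = (\<lambda>x. 0)" unfolding lhat_def by auto
  then show ?thesis by (simp only:) (rule continuous_on_const)
qed

lemma lhat_cont2: "continuous_on UNIV (lhat P)"
  by (intro continuous_on_coordinatewise_then_product lhat_cont)

lemma psi_cont: "continuous_on UNIV (psi P)"
  unfolding psi_def out_layer_def
  by (intro continuous_on_vec_lambda continuous_intros hidden_cont)

lemma relu_facts: "relu z \<ge> z" "relu z \<ge> 0" "relu z * (relu z - z) = 0"
  unfolding relu_def by auto

lemma lhat_feasible: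
  assumes "depth P \<ge> 2"
  shows "feasible P x (psi P x) (lhat P x)"
proof -
  have ls: "lhat P x \<in> lam_space P"
    unfolding lam_space_def lhat_def
  proof (intro CollectI allI impI)
    fix i j assume h: "i < 1 \<or> depth P - 1 < i \<or> width P i \<le> j"
    show "(if 1 \<le> i \<and> i \<le> depth P - 1 then hidden P x i j else 0) = 0"
    proof (cases "1 \<le> i \<and> i \<le> depth P - 1")
      case True
      then obtain i' where "i = Suc i'" by (cases i) auto
      with True h show ?thesis by auto
    qed (simp only: if_False)
  qed
  have pa: "pre_act P x i (lhat P x (i - 1)) j = pre_act P x i (hidden P x (i - 1)) j"
    if "i \<in> {1..depth P - 1}" for i j
  proof (cases "i = 1")
    case True then show ?thesis by (simp add: pre_act_def)
  next
    case False
    with that have "lhat P x (i - 1) = hidden P x (i - 1)"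
      unfolding lhat_def by (auto simp: fun_eq_iff)
    then show ?thesis by simp
  qed
  have hv: "lhat P x i j = relu (pre_act P x i (hidden P x (i - 1)) j)"
    if "i \<in> {1..depth P - 1}" "j < width P i" for i j
  proof -
    have "i \<noteq> 0" using that by simp
    then obtain i' where "i = Suc i'" by (cases i) auto
    then show ?thesis using that unfolding lhat_def by simp
  qed
  have "lhat P x (depth P - 1) = hidden P x (depth P - 1)"
    using assms unfolding lhat_def by auto
  then show ?thesis
    unfolding feasible_def psi_def
    using ls pa hv relu_facts by simp
qed

lemma lamnorm_cont: "continuous_on UNIV (\<lambda>x. lam_norm P (lhat P x))"
  unfolding lam_norm_def
  apply (rule continuous_on_real_sqrt)
  apply (rule continuous_on_sum)
  apply (rule continuous_on_sum)
  apply (rule continuous_on_power)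
  apply (rule lhat_cont)
  done

theorem corollary1:
  fixes f :: "real^'n \<Rightarrow> real^'m \<Rightarrow> real^'n"
    and P :: "('n, 'm) relu_net"
  assumes "polynomial_map f"
    and "depth P \<ge> 2"
  shows "(\<exists>U. open U \<and> 0 \<in> U \<and>
            bounded ((\<lambda>x. Inf {norm u + lam_norm P l | u l. feasible P x u l}) ` U))
       \<and> (\<forall>V :: real^'n \<Rightarrow> real^'m \<Rightarrow> (nat \<Rightarrow> nat \<Rightarrow> real) \<Rightarrow> real.
            continuous_on (UNIV \<times> UNIV \<times> lam_space P) (\<lambda>(x, u, l). V x u l)
            \<and> (\<forall>x u l x' u' l'.
                  x' = f x u \<and> feasible P x u l \<and> feasible P x' u' l' \<longrightarrow>
                    V x' u' l' - V x u l \<le> - (norm x)\<^sup>2 \<and> V x u l \<ge> 0)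
            \<longrightarrow> glob_asymp_stable (\<lambda>x. f x (psi P x)))"
proof (intro conjI allI impI)
  define H where "H x = norm (psi P x) + lam_norm P (lhat P x)" for x
  have Hc: "continuous_on UNIV H"
    unfolding H_def
    by (rule continuous_on_add[OF continuous_on_norm[OF psi_cont] lamnorm_cont])
  have "compact (H ` cball 0 1)"
    by (rule compact_continuous_image) (auto intro: continuous_on_subset[OF Hc])
  then obtain B where B: "\<And>x. x \<in> cball 0 1 \<Longrightarrow> norm (H x) \<le> B"
    using compact_imp_bounded bounded_iff by (metis imageI)
  have "bounded ((\<lambda>x. Inf {norm u + lam_norm P l | u l. feasible P x u l}) ` ball 0 1)"
    unfolding bounded_iff
  proof (intro exI ballI, elim imageE)
    fix y x assume y: "y = Inf {norm u + lam_norm P l | u l. feasible P x u l}"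
      and x: "x \<in> ball (0::real^'n) 1"
    let ?S = "{norm u + lam_norm P l | u l. feasible P x u l}"
    have mem: "H x \<in> ?S" unfolding H_def using lhat_feasible[OF assms(2)] by blast
    have nn: "0 \<le> norm u + lam_norm P l" for u l
      unfolding lam_norm_def by (intro add_nonneg_nonneg norm_ge_zero real_sqrt_ge_zero sum_nonneg zero_le_power2)
    have bb: "bdd_below ?S"
      by (rule bdd_belowI[of _ 0]) (use nn in auto)
    have "y \<le> H x" unfolding y by (rule cInf_lower[OF mem bb])
    moreover have "0 \<le> y" unfolding y
      by (rule cInf_greatest) (use mem nn in auto)
    moreover have "H x \<le> B" using B[of x] x by auto
    ultimately show "norm y \<le> B" by simp
  qed
  then show "\<exists>U. open U \<and> 0 \<in> U \<and>
            bounded ((\<lambda>x. Inf {norm u + lam_norm P l | u l. feasible P x u l}) ` U)"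
    by (intro exI[of _ "ball 0 1"]) auto
next
  fix V :: "real^'n \<Rightarrow> real^'m \<Rightarrow> (nat \<Rightarrow> nat \<Rightarrow> real) \<Rightarrow> real"
  assume A: "continuous_on (UNIV \<times> UNIV \<times> lam_space P) (\<lambda>(x, u, l). V x u l)
            \<and> (\<forall>x u l x' u' l'.
                  x' = f x u \<and> feasible P x u l \<and> feasible P x' u' l' \<longrightarrow>
                    V x' u' l' - V x u l \<le> - (norm x)\<^sup>2 \<and> V x u l \<ge> 0)"
  define F where "F x = f x (psi P x)" for x
  define G where "G x = V x (psi P x) (lhat P x)" for x
  have Gc: "continuous_on UNIV G"
  proof -
    have "continuous_on UNIV (\<lambda>x. (\<lambda>(x, u, l). V x u l) (x, psi P x, lhat P x))"
      apply (rule continuous_on_compose2[OF conjunct1[OF A]])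
       apply (intro continuous_on_Pair continuous_on_id psi_cont lhat_cont2)
      using lhat_feasible[OF assms(2)] by (auto simp: feasible_def)
    then show ?thesis unfolding G_def by simp
  qed
  then have Gi: "isCont G 0" by (simp add: continuous_on_eq_continuous_at)
  have step: "G (F x) - G x \<le> - (norm x)\<^sup>2 \<and> G x \<ge> 0" for x
    using conjunct2[OF A, rule_format, of "F x" x "psi P x" "lhat P x" "psi P (F x)" "lhat P (F x)"]
      lhat_feasible[OF assms(2)] unfolding F_def G_def by blast
  have key: "(\<lambda>k. (F ^^ k) x0) \<longlonglongrightarrow> 0 \<and> (\<forall>k. (norm ((F ^^ k) x0))\<^sup>2 \<le> G x0 - G 0)" for x0
  proof -
    define X where "X k = (F ^^ k) x0" for k
    have XS: "X (Suc k) = F (X k)" for k unfolding X_def by simp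
    have dec: "decseq (\<lambda>k. G (X k))"
    proof (rule decseq_SucI)
      fix n
      have "G (F (X n)) - G (X n) \<le> - (norm (X n))\<^sup>2" using step[of "X n"] by blast
      moreover have "0 \<le> (norm (X n))\<^sup>2" by simp
      ultimately show "G (X (Suc n)) \<le> G (X n)" unfolding XS by linarith
    qed
    obtain L where L: "(\<lambda>k. G (X k)) \<longlonglongrightarrow> L" "\<forall>i. L \<le> G (X i)"
    proof -
      have "\<forall>i. 0 \<le> G (X i)" using step by blast
      from decseq_convergent[OF dec this] show ?thesis using that by blast
    qed
    have "(\<lambda>k. G (X k) - G (X (Suc k))) \<longlonglongrightarrow> L - L"
      by (intro tendsto_diff L(1)) (rule LIMSEQ_Suc[OF L(1)])
    then have D0: "(\<lambda>k. G (X k) - G (X (Suc k))) \<longlonglongrightarrow> 0" by simp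
    have le1: "(norm (X k))\<^sup>2 \<le> G (X k) - G (X (Suc k))" for k
      using step[of "X k"] XS[of k] by simp
    have "(\<lambda>k. (norm (X k))\<^sup>2) \<longlonglongrightarrow> 0"
    proof (rule tendsto_sandwich[OF _ _ tendsto_const D0])
      show "\<forall>\<^sub>F n in sequentially. 0 \<le> (norm (X n))\<^sup>2" by (rule always_eventually) simp
      show "\<forall>\<^sub>F n in sequentially. (norm (X n))\<^sup>2 \<le> G (X n) - G (X (Suc n))"
        by (rule always_eventually) (use le1 in blast)
    qed
    then have "(\<lambda>k. sqrt ((norm (X k))\<^sup>2)) \<longlonglongrightarrow> sqrt 0" by (rule tendsto_real_sqrt)
    then have "(\<lambda>k. norm (X k)) \<longlonglongrightarrow> 0" by simp
    then have X0: "X \<longlonglongrightarrow> 0" by (simp add: tendsto_norm_zero_iff)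
    have "(\<lambda>k. G (X k)) \<longlonglongrightarrow> G 0" by (rule isCont_tendsto_compose[OF Gi X0])
    then have "L = G 0" using L(1) LIMSEQ_unique by blast
    then have ge: "G 0 \<le> G (X k)" for k using L(2) by simp
    have "(norm (X k))\<^sup>2 \<le> G x0 - G 0" for k
    proof -
      have "(norm (X k))\<^sup>2 \<le> G (X k) - G (X (Suc k))" using step[of "X k"] XS[of k] by simp
      also have "\<dots> \<le> G (X k) - G 0" using ge[of "Suc k"] by simp
      also have "\<dots> \<le> G (X 0) - G 0" using decseqD[OF dec, of 0 k] by simp
      finally show ?thesis by (simp add: X_def)
    qed
    with X0 show ?thesis unfolding X_def by simp
  qed
  show "glob_asymp_stable (\<lambda>x. f x (psi P x))"
    unfolding glob_asymp_stable_def F_def[symmetric]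
  proof (intro conjI allI impI)
    fix x0 show "(\<lambda>k. (F ^^ k) x0) \<longlonglongrightarrow> 0" using key by blast
  next
    fix e :: real assume e: "e > 0"
    then have "e\<^sup>2 > 0" by simp
    from Gi[unfolded continuous_at_eps_delta, rule_format, OF this]
    obtain d where d: "d > 0" "\<And>x. dist x 0 < d \<Longrightarrow> dist (G x) (G 0) < e\<^sup>2" by blast
    show "\<exists>\<delta>>0. \<forall>x0. norm x0 \<le> \<delta> \<longrightarrow> (\<forall>k. norm ((F ^^ k) x0) \<le> e)"
    proof (intro exI[of _ "d/2"] conjI allI impI)
      show "d/2 > 0" using d by simp
      fix x0 k assume "norm (x0::real^'n) \<le> d/2"
      then have "dist (G x0) (G 0) < e\<^sup>2" using d by simp
      moreover have "(norm ((F ^^ k) x0))\<^sup>2 \<le> G x0 - G 0" using key[of x0] by blast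
      ultimately have "(norm ((F ^^ k) x0))\<^sup>2 \<le> e\<^sup>2" by (simp add: dist_real_def)
      then show "norm ((F ^^ k) x0) \<le> e" using e by (simp add: power2_le_iff_abs_le)
    qed
  qed
qed

end
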